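(* Let $\mathcal F\subseteq\binom{[n]}{k}$ be a left-compressed $t$-intersecting family, let $g(\mathcal F)\in G_*(\mathcal F)$ and $s=s^+(g(\mathcal F))$. Suppose $g^*_i(\mathcal F)\ne\emptyset$, let $j=s+t-i\ne i$, and let $\mathcal F_1=\mathcal F\cup\mathscr D(g^*_i(\mathcal F)')\setminus\mathscr D(g^*_j(\mathcal F))$. Then \begin{align*} \zeta_{k-1}(\mathcal F_1)-\zeta_{k-1}(\mathcal F)\ \ge\ & |g^*_i(\mathcal F)|\binom{n-s}{k-i}\binom{n-s-k+i}{2}+\zeta_{i-1,s}(g^*_i(\mathcal F),\mathcal F|_{[s]})\binom{n-s}{k-i+1}\\ &+|g^*_i(\mathcal F)|(s-i+1)(k-i+1)\binom{n-s}{k-i+1}-|g^*_j(\mathcal F)|\binom{n-s}{k-j-1}\binom{n-s-k+j+1}{2}\\ &-\zeta_{j-1,s}(g^*_j(\mathcal F),\mathcal F|_{[s]})\binom{n-s}{k-j}-|g^*_j(\mathcal F)|(s-j)(k-j+1)\binom{n-s}{k-j}. \end{align*}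
   Context: $[m]=\{1,\dots,m\}$, $[a,b]=\{a,\dots,b\}$. A family is $t$-intersecting if any two members share at least $t$ elements; left-compressed means invariant under all shifts $\Delta_{ij}$, $1\le i<j\le n$, where $\delta_{ij}(A)=(A\setminus\{j\})\cup\{i\}$ if $j\in A$, $i\notin A$, $(A\setminus\{j\})\cup\{i\}\notin\mathcal F$, else $\delta_{ij}(A)=A$, and $\Delta_{ij}(\mathcal F)=\{\delta_{ij}(A):A\in\mathcal F\}$. Generating sets: for $E\subseteq[n]$, $\mathcal U(E)=\{A\subseteq[n]:E\subseteq A\}$, $s^+(E)=\max E$; for a family $\mathcal E$, $\mathcal U(\mathcal E)=\bigcup_{E\in\mathcal E}\mathcal U(E)$ and $s^+(\mathcal E)=\max_{E\in\mathcal E}s^+(E)$. A family $g(\mathcal F)\subseteq\bigcup_{i\le k}\binom{[n]}{i}$ is a generating set of $\mathcal F$ if $\mathcal U(g(\mathcal F))\cap\binom{[n]}{k}=\mathcal F$; $G(\mathcal F)$ is the set of all generating sets. Let $s=\min\{s^+(g):g\in G(\mathcal F)\}$, and $G_*(\mathcal F)$ the set of $g\in G(\mathcal F)$ such that $g$ equals its set of inclusion-minimal elements (an antichain) and $s^+(g)=s$. Put $\mathcal F|_{[s]}=\{F\cap[s]:F\in\mathcal F\}$. For $g(\mathcal F)\in G_*(\mathcal F)$: $g^*(\mathcal F)=\{E\in g(\mathcal F):s\in E\}$, $g^*_i(\mathcal F)=\{E\in g^*(\mathcal F):|E|=i\}$, $g^*_i(\mathcal F)'=\{E\setminus\{s\}:E\in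 g^*_i(\mathcal F)\}$. For $E\subseteq[n]$, $\mathscr D(E)=\{B\in\binom{[n]}{k}: B\cap[s^+(E)]=E\}$, and $\mathscr D(\mathcal E)=\bigcup_{E\in\mathcal E}\mathscr D(E)$. For families $\mathcal F,\mathcal G\subseteq 2^{[n]}$ and integers $u,v$: $\zeta_u(\mathcal F,\mathcal G)$ is the number of unordered pairs $\{F,G\}$ with $F\in\mathcal F$, $G\in\mathcal G$, $|F|=|G|=u+1$, $|F\cap G|=u$; $\zeta_{u,v}(\mathcal F,\mathcal G)$ counts those pairs with additionally $v\in F\cap G$; $\zeta_u(\mathcal F)=\zeta_u(\mathcal F,\mathcal F)$. In particular $\zeta_{k-1}(\mathcal F)$ is the number of unordered pairs of members of $\mathcal F$ meeting in $k-1$ elements. *)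

theory Defs
  imports Main
begin

definition kfam :: "nat \<Rightarrow> nat \<Rightarrow> nat set set" where
  "kfam n k = {A. A \<subseteq> {1..n} \<and> card A = k}"

definition t_intersecting :: "nat \<Rightarrow> nat set set \<Rightarrow> bool" where
  "t_intersecting t F \<longleftrightarrow> (\<forall>A\<in>F. \<forall>B\<in>F. t \<le> card (A \<inter> B))"

definition shift_set :: "nat \<Rightarrow> nat \<Rightarrow> nat set set \<Rightarrow> nat set \<Rightarrow> nat set" where
  "shift_set i j F A =
     (if j \<in> A \<and> i \<notin> A \<and> (A - {j}) \<union> {i} \<notin> F then (A - {j}) \<union> {i} else A)"

definition shift_fam :: "nat \<Rightarrow> nat \<Rightarrow> nat set set \<Rightarrow> nat set set" where
  "shift_fam i j F = shift_set i j F ` F"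

definition left_compressed :: "nat \<Rightarrow> nat set set \<Rightarrow> bool" where
  "left_compressed n F \<longleftrightarrow> (\<forall>i j. 1 \<le> i \<and> i < j \<and> j \<le> n \<longrightarrow> shift_fam i j F = F)"

definition upset :: "nat \<Rightarrow> nat set \<Rightarrow> nat set set" where
  "upset n E = {A. A \<subseteq> {1..n} \<and> E \<subseteq> A}"

definition upset_fam :: "nat \<Rightarrow> nat set set \<Rightarrow> nat set set" where
  "upset_fam n \<E> = (\<Union>E\<in>\<E>. upset n E)"

definition splus :: "nat set \<Rightarrow> nat" where
  "splus E = (if E = {} then 0 else Max E)"

definition splus_fam :: "nat set set \<Rightarrow> nat" where
  "splus_fam \<E> = (if \<E> = {} then 0 else Max (splus ` \<E>))"

definition gen_sets :: "nat \<Rightarrow> nat \<Rightarrow> nat set set \<Rightarrow> nat set set set" where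
  "gen_sets n k F = {g. g \<subseteq> {E. E \<subseteq> {1..n} \<and> card E \<le> k} \<and> upset_fam n g \<inter> kfam n k = F}"

definition s_min :: "nat \<Rightarrow> nat \<Rightarrow> nat set set \<Rightarrow> nat" where
  "s_min n k F = (LEAST m. \<exists>g\<in>gen_sets n k F. splus_fam g = m)"

definition minimal_elems :: "nat set set \<Rightarrow> nat set set" where
  "minimal_elems g = {E\<in>g. \<forall>E'\<in>g. E' \<subseteq> E \<longrightarrow> E' = E}"

definition gen_sets_star :: "nat \<Rightarrow> nat \<Rightarrow> nat set set \<Rightarrow> nat set set set" where
  "gen_sets_star n k F =
     {g\<in>gen_sets n k F. g = minimal_elems g \<and> splus_fam g = s_min n k F}"

definition restrict_fam :: "nat set set \<Rightarrow> nat \<Rightarrow> nat set set" where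
  "restrict_fam F s = (\<lambda>A. A \<inter> {1..s}) ` F"

definition gstar_i :: "nat set set \<Rightarrow> nat \<Rightarrow> nat \<Rightarrow> nat set set" where
  "gstar_i g s i = {E\<in>g. s \<in> E \<and> card E = i}"

definition gstar_i' :: "nat set set \<Rightarrow> nat \<Rightarrow> nat \<Rightarrow> nat set set" where
  "gstar_i' g s i = (\<lambda>E. E - {s}) ` gstar_i g s i"

definition Dset :: "nat \<Rightarrow> nat \<Rightarrow> nat set \<Rightarrow> nat set set" where
  "Dset n k E = {B\<in>kfam n k. B \<inter> {1..splus E} = E}"

definition Dfam :: "nat \<Rightarrow> nat \<Rightarrow> nat set set \<Rightarrow> nat set set" where
  "Dfam n k \<E> = (\<Union>E\<in>\<E>. Dset n k E)"

definition zeta :: "nat \<Rightarrow> nat set set \<Rightarrow> nat set set \<Rightarrow> nat" where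
  "zeta u F G = card {{A, B} | A B. A \<in> F \<and> B \<in> G \<and> card A = u + 1 \<and> card B = u + 1
                                    \<and> card (A \<inter> B) = u}"

definition zeta_v :: "nat \<Rightarrow> nat \<Rightarrow> nat set set \<Rightarrow> nat set set \<Rightarrow> nat" where
  "zeta_v u v F G = card {{A, B} | A B. A \<in> F \<and> B \<in> G \<and> card A = u + 1 \<and> card B = u + 1
                                    \<and> card (A \<inter> B) = u \<and> v \<in> A \<inter> B}"

definition ibinom :: "int \<Rightarrow> int \<Rightarrow> int" where
  "ibinom a b = (if a < 0 \<or> b < 0 then 0 else int (nat a choose nat b))"

end

theory Submission
  imports Defs
begin

lemma pair_count:
  assumes S: "finite S" and m: "1 \<le> m"
  shows "card {{R,R'} | R R'. R \<subseteq> S \<and> R' \<subseteq> S \<and> card R = m \<and> card R' = m \<and> card (R \<inter> R') + 1 = m}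
        = (card S choose (m-1)) * ((card S - (m-1)) choose 2)"
proof -
  define IS where "IS = {I. I \<subseteq> S \<and> card I = m - 1}"
  define DS where "DS = (\<lambda>I. {D. D \<subseteq> S - I \<and> card D = 2})"
  define f where "f = (\<lambda>(I::'a set, D::'a set). (\<lambda>x. insert x I) ` D)"
  define h where "h = (\<lambda>Q::'a set set. (\<Inter>Q, \<Union>Q - \<Inter>Q))"
  have hf: "h (f (I,D)) = (I,D)" if "I \<in> IS" "D \<in> DS I" for I D
  proof -
    from that obtain a b where D: "D = {a,b}" "a \<noteq> b" "a \<notin> I" "b \<notin> I"
      unfolding DS_def by (auto simp: card_2_iff)
    show ?thesis using D unfolding h_def f_def by auto
  qed
  have inj: "inj_on f (Sigma IS DS)"
    by (rule inj_on_inverseI[where g=h]) (auto simp: hf)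
  have eq: "f ` Sigma IS DS = {{R,R'} | R R'. R \<subseteq> S \<and> R' \<subseteq> S \<and> card R = m \<and> card R' = m \<and> card (R \<inter> R') + 1 = m}"
  proof (rule set_eqI, rule iffI)
    fix Q assume "Q \<in> f ` Sigma IS DS"
    then obtain I D where I: "I \<in> IS" "D \<in> DS I" and Q: "Q = f (I,D)" by auto
    from I obtain a b where D: "D = {a,b}" "a \<noteq> b" "a \<notin> I" "b \<notin> I" "a \<in> S" "b \<in> S"
      unfolding DS_def by (auto simp: card_2_iff)
    have fI: "finite I" using I S unfolding IS_def by (auto intro: finite_subset)
    have II: "insert a I \<inter> insert b I = I" using D by auto
    have Qe: "Q = {insert a I, insert b I}" using Q D unfolding f_def by auto
    have IS': "I \<subseteq> S" "card I = m - 1" using I unfolding IS_def by auto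
    have c: "card (insert a I) = m" "card (insert b I) = m" using IS' fI D m by auto
    have c3: "card (insert a I \<inter> insert b I) + 1 = m" using II IS' m by simp
    have sub: "insert a I \<subseteq> S" "insert b I \<subseteq> S" using IS' D by auto
    show "Q \<in> {{R,R'} | R R'. R \<subseteq> S \<and> R' \<subseteq> S \<and> card R = m \<and> card R' = m \<and> card (R \<inter> R') + 1 = m}"
      using Qe c c3 sub by blast
  next
    fix Q assume "Q \<in> {{R,R'} | R R'. R \<subseteq> S \<and> R' \<subseteq> S \<and> card R = m \<and> card R' = m \<and> card (R \<inter> R') + 1 = m}"
    then obtain R R' where Q: "Q = {R,R'}" and RR: "R \<subseteq> S" "R' \<subseteq> S" "card R = m" "card R' = m"
      "card (R \<inter> R') + 1 = m" by blast
    have fR: "finite R" "finite R'" using RR S by (auto intro: finite_subset)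
    have c1: "card (R - R') = 1" using card_Diff_subset_Int[of R R'] RR fR
      by (simp add: Diff_Int2 card_Diff_subset_Int) 
    have c2: "card (R' - R) = 1" using card_Diff_subset_Int[of R' R] RR fR
      by (simp add: Int_commute)
    obtain a where a: "R - R' = {a}" using c1 by (auto simp: card_1_singleton_iff)
    obtain b where b: "R' - R = {b}" using c2 by (auto simp: card_1_singleton_iff)
    have ab: "a \<noteq> b" using a b by auto
    have R: "R = insert a (R \<inter> R')" using a by auto
    have R': "R' = insert b (R \<inter> R')" using b by auto
    have "(R \<inter> R', {a,b}) \<in> Sigma IS DS"
      unfolding IS_def DS_def using RR a b ab by auto
    moreover have "f (R \<inter> R', {a,b}) = Q" unfolding f_def Q using R R' by auto
    ultimately show "Q \<in> f ` Sigma IS DS" by (metis image_eqI)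
  qed
  have fIS: "finite IS" unfolding IS_def using S by auto
  have cD: "card (DS I) = (card S - (m-1)) choose 2" if "I \<in> IS" for I
  proof -
    have "I \<subseteq> S" "card I = m - 1" using that unfolding IS_def by auto
    then have "card (S - I) = card S - (m-1)" using S by (simp add: card_Diff_subset finite_subset)
    then show ?thesis unfolding DS_def using n_subsets[of "S - I" 2] S by auto
  qed
  have "card (Sigma IS DS) = (\<Sum>I\<in>IS. card (DS I))"
    using fIS S unfolding DS_def by (intro card_SigmaI) auto
  also have "\<dots> = card IS * ((card S - (m-1)) choose 2)" using cD by simp
  also have "card IS = card S choose (m-1)" unfolding IS_def using n_subsets[OF S] by simp
  finally have "card (Sigma IS DS) = (card S choose (m-1)) * ((card S - (m-1)) choose 2)" .
  then show ?thesis using eq card_image[OF inj] by simp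
qed

locale ctx =
  fixes n k s :: nat and F g :: "nat set set"
  assumes Fk: "F \<subseteq> kfam n k"
  and gen: "upset_fam n g \<inter> kfam n k = F"
  and gsub: "\<And>G. G \<in> g \<Longrightarrow> G \<subseteq> {1..n} \<and> card G \<le> k"
  and anti: "\<And>G G'. G \<in> g \<Longrightarrow> G' \<in> g \<Longrightarrow> G' \<subseteq> G \<Longrightarrow> G' = G"
  and gs: "\<And>G. G \<in> g \<Longrightarrow> G \<subseteq> {1..s}"
  and lc: "left_compressed n F"
  and sn: "s \<le> n"
  and k1: "1 \<le> k"
begin

lemma inF: "B \<subseteq> {1..n} \<Longrightarrow> card B = k \<Longrightarrow> G \<in> g \<Longrightarrow> G \<subseteq> B \<Longrightarrow> B \<in> F"
  using gen unfolding upset_fam_def upset_def kfam_def by blast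

lemma Fgen: "B \<in> F \<Longrightarrow> \<exists>G\<in>g. G \<subseteq> B \<inter> {1..s}"
proof -
  assume "B \<in> F"
  then have "B \<in> upset_fam n g" using gen by blast
  then obtain G where G: "G \<in> g" "B \<in> upset n G" unfolding upset_fam_def by blast
  then have "G \<subseteq> B" unfolding upset_def by blast
  then show ?thesis using G gs[of G] by blast
qed

lemma Fk': "B \<in> F \<Longrightarrow> B \<subseteq> {1..n} \<and> card B = k"
  using Fk unfolding kfam_def by blast

lemma shiftF:
  assumes "A \<in> F" "1 \<le> y" "y < x" "x \<le> n" "x \<in> A" "y \<notin> A"
  shows "(A - {x}) \<union> {y} \<in> F"
proof (rule ccontr)
  assume nF: "(A - {x}) \<union> {y} \<notin> F"
  have "shift_fam y x F = F" using lc assms unfolding left_compressed_def by auto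
  moreover have "shift_set y x F A = (A - {x}) \<union> {y}" using assms nF unfolding shift_set_def by auto
  ultimately show False using assms(1) nF unfolding shift_fam_def by blast
qed

lemma finE: "G \<in> g \<Longrightarrow> finite G"
  using gsub finite_subset by blast

lemma splusE: "E \<in> g \<Longrightarrow> s \<in> E \<Longrightarrow> splus E = s"
  using gs[of E] finE[of E] unfolding splus_def
  by (metis Max_eqI atLeastAtMost_iff empty_iff subset_iff)

definition Rs :: "nat \<Rightarrow> nat set set" where
  "Rs m = {R. R \<subseteq> {s<..n} \<and> card R = m}"

lemma card_Rs: "card (Rs m) = (n - s) choose m"
  unfolding Rs_def using n_subsets[of "{s<..n}" m] by simp

lemma fin_Rs: "finite (Rs m)"
  unfolding Rs_def by simp

definition cut :: "nat set \<Rightarrow> nat set" where "cut X = X \<inter> {1..s}"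

lemma Rm_char:
  "Dfam n k (gstar_i g s j) = {B \<in> kfam n k. \<exists>E\<in>gstar_i g s j. B \<inter> {1..s} = E}"
  unfolding Dfam_def Dset_def gstar_i_def using splusE by auto

lemma Rm_sub: "Dfam n k (gstar_i g s j) \<subseteq> F"
proof
  fix B assume "B \<in> Dfam n k (gstar_i g s j)"
  then have "B \<in> kfam n k \<and> (\<exists>E\<in>gstar_i g s j. B \<inter> {1..s} = E)" using Rm_char by blast
  then obtain E where "B \<in> kfam n k" "E \<in> g" "B \<inter> {1..s} = E" unfolding gstar_i_def by auto
  then show "B \<in> F" using inF unfolding kfam_def by blast
qed

lemma N_props:
  assumes E: "E \<in> gstar_i g s i" and R: "R \<in> Rs (k - i + 1)"
  shows "(E - {s}) \<union> R \<in> Dfam n k (gstar_i' g s i)"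
    and "(E - {s}) \<union> R \<notin> Dfam n k (gstar_i g s j)"
    and "(E - {s}) \<union> R \<notin> F"
    and "card ((E - {s}) \<union> R) = k"
    and "cut ((E - {s}) \<union> R) = E - {s}"
    and "(E - {s}) \<union> R - {1..s} = R"
    and "(E - {s}) \<union> R \<subseteq> {1..n}"
proof -
  have Eg: "E \<in> g" "s \<in> E" "card E = i" using E unfolding gstar_i_def by auto
  have Es: "E \<subseteq> {1..s}" using gs Eg by auto
  have fE: "finite E" using finE Eg by auto
  have ik: "i \<le> k" using gsub Eg by auto
  have Rsub: "R \<subseteq> {s<..n}" "card R = k - i + 1" using R unfolding Rs_def by auto
  have fR: "finite R" using Rsub finite_subset by blast
  have i1: "1 \<le> i" using Eg fE by (metis One_nat_def Suc_leI card_gt_0_iff empty_iff)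
  show cB: "card ((E - {s}) \<union> R) = k"
  proof -
    have d1: "\<forall>x\<in>R. s < x" using Rsub by auto
    have d2: "\<forall>x\<in>E. x \<le> s" using Es by auto
    have "(E - {s}) \<inter> R = {}" using d1 d2 by fastforce
    then have "card ((E - {s}) \<union> R) = card (E - {s}) + card R"
      using fE fR by (intro card_Un_disjoint) auto
    then show ?thesis using Eg Rsub fE ik i1 by simp
  qed
  show cut: "cut ((E - {s}) \<union> R) = E - {s}" unfolding cut_def using Es Rsub by auto
  show "(E - {s}) \<union> R - {1..s} = R" using Es Rsub by auto
  show sub: "(E - {s}) \<union> R \<subseteq> {1..n}" using Es Rsub sn by auto
  show "(E - {s}) \<union> R \<notin> Dfam n k (gstar_i g s j)"
  proof
    assume "(E - {s}) \<union> R \<in> Dfam n k (gstar_i g s j)"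
    then obtain E2 where "E2 \<in> gstar_i g s j" "((E - {s}) \<union> R) \<inter> {1..s} = E2"
      using Rm_char by blast
    then have "s \<in> (E - {s}) \<union> R" unfolding gstar_i_def by auto
    then show False using Rsub by auto
  qed
  show "(E - {s}) \<union> R \<notin> F"
  proof
    assume "(E - {s}) \<union> R \<in> F"
    from Fgen[OF this] obtain G where "G \<in> g" "G \<subseteq> ((E - {s}) \<union> R) \<inter> {1..s}" by blast
    moreover have "((E - {s}) \<union> R) \<inter> {1..s} = E - {s}" using cut unfolding cut_def .
    ultimately have "G \<in> g" "G \<subseteq> E - {s}" by auto
    then show False using anti[of E G] Eg by auto
  qed
  show "(E - {s}) \<union> R \<in> Dfam n k (gstar_i' g s i)"
  proof -
    have "((E - {s}) \<union> R) \<inter> {1..splus (E - {s})} = E - {s}"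
    proof (cases "E - {s} = {}")
      case True then show ?thesis unfolding splus_def by auto
    next
      case False
      have "Max (E - {s}) \<le> s" using Es fE False by auto
      then have h1: "\<forall>x\<in>R. x > Max (E - {s})" using Rsub by auto
      have h2: "\<forall>x\<in>E - {s}. x \<le> Max (E - {s}) \<and> 1 \<le> x" using fE Es by auto
      have h3: "splus (E - {s}) = Max (E - {s})" using False unfolding splus_def by simp
      obtain M where M: "splus (E - {s}) = M" "\<forall>x\<in>R. x > M" "\<forall>x\<in>E - {s}. x \<le> M \<and> 1 \<le> x"
        using h1 h2 h3 by blast
      have "((E - {s}) \<union> R) \<inter> {1..M} = E - {s}"
      proof (rule set_eqI)
        fix x
        show "x \<in> ((E - {s}) \<union> R) \<inter> {1..M} \<longleftrightarrow> x \<in> E - {s}"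
        proof
          assume "x \<in> ((E - {s}) \<union> R) \<inter> {1..M}"
          then have a: "x \<in> (E - {s}) \<union> R" and b: "x \<le> M" by auto
          show "x \<in> E - {s}"
          proof (rule ccontr)
            assume "x \<notin> E - {s}"
            with a have "x \<in> R" by blast
            with M(2) have "M < x" by blast
            with b show False by simp
          qed
        next
          assume "x \<in> E - {s}"
          then show "x \<in> ((E - {s}) \<union> R) \<inter> {1..M}" using M(3) by simp
        qed
      qed
      then show ?thesis by (simp only: M(1))
    qed
    then have "(E - {s}) \<union> R \<in> Dset n k (E - {s})" unfolding Dset_def kfam_def using cB sub by auto
    then show ?thesis unfolding Dfam_def gstar_i'_def using E by auto
  qed
qed

end

context ctx begin

definition PR :: "nat \<Rightarrow> nat set set set" where
  "PR m = {{R,R'} | R R'. R \<subseteq> {s<..n} \<and> R' \<subseteq> {s<..n} \<and> card R = m \<and> card R' = m \<and> card (R \<inter> R') + 1 = m}"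

lemma card_PR: "1 \<le> m \<Longrightarrow> card (PR m) = ((n - s) choose (m - 1)) * ((n - s - (m - 1)) choose 2)"
  unfolding PR_def using pair_count[of "{s<..n}" m] by simp

lemma PR0: "PR 0 = {}"
  unfolding PR_def by auto

lemma PR_memE:
  assumes "q \<in> PR m"
  obtains R R' where "q = {R,R'}" "R \<in> Rs m" "R' \<in> Rs m" "card (R \<inter> R') + 1 = m"
proof -
  obtain R R' where "q = {R,R'}" "R \<subseteq> {s<..n}" "R' \<subseteq> {s<..n}" "card R = m" "card R' = m" "card (R \<inter> R') + 1 = m"
    using assms unfolding PR_def by blast
  then show ?thesis using that unfolding Rs_def by blast
qed

lemma fin_PR: "finite (PR m)"
proof -
  have "PR m \<subseteq> Pow (Rs m)"
  proof
    fix q assume "q \<in> PR m"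
    then show "q \<in> Pow (Rs m)" by (rule PR_memE) auto
  qed
  then show ?thesis using fin_Rs finite_subset by blast
qed

definition Z :: "nat set set \<Rightarrow> nat set set set" where
  "Z X = {{A,B} | A B. A \<in> X \<and> B \<in> X \<and> card A = k - 1 + 1 \<and> card B = k - 1 + 1 \<and> card (A \<inter> B) = k - 1}"

definition ZV :: "nat \<Rightarrow> nat set set set" where
  "ZV i = {{A,B} | A B. A \<in> gstar_i g s i \<and> B \<in> restrict_fam F s \<and> card A = i - 1 + 1 \<and> card B = i - 1 + 1
            \<and> card (A \<inter> B) = i - 1 \<and> s \<in> A \<inter> B}"

lemma Z_mono: "X \<subseteq> Y \<Longrightarrow> Z X \<subseteq> Z Y"
  unfolding Z_def by blast

lemma Z_fin: "finite X \<Longrightarrow> finite (Z X)"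
proof -
  assume "finite X"
  moreover have "Z X \<subseteq> Pow X" unfolding Z_def by blast
  ultimately show ?thesis using finite_subset by blast
qed

lemma Z_memE:
  assumes "Q \<in> Z X"
  obtains A B where "Q = {A,B}" "A \<in> X" "B \<in> X" "card A = k" "card B = k" "card (A \<inter> B) = k - 1"
proof -
  obtain A B where "Q = {A,B}" "A \<in> X" "B \<in> X" "card A = k - 1 + 1" "card B = k - 1 + 1" "card (A \<inter> B) = k - 1"
    using assms unfolding Z_def by blast
  then show ?thesis using that k1 by simp
qed

lemma Z_intro: "A \<in> X \<Longrightarrow> B \<in> X \<Longrightarrow> card A = k \<Longrightarrow> card B = k \<Longrightarrow> card (A \<inter> B) = k - 1 \<Longrightarrow> {A,B} \<in> Z X"
  unfolding Z_def using k1 by auto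

lemma fin_kfam: "finite (kfam n k)"
proof -
  have "kfam n k \<subseteq> Pow {1..n}" unfolding kfam_def by blast
  then show ?thesis using finite_subset by blast
qed

lemma Dfam_kfam: "Dfam n k X \<subseteq> kfam n k"
  unfolding Dfam_def Dset_def by blast

lemma ZV_memE:
  assumes "p \<in> ZV i"
  obtains A B where "p = {A,B}" "A \<in> gstar_i g s i" "B \<in> restrict_fam F s" "card A = i" "card B = i"
   "card (A \<inter> B) = i - 1" "s \<in> A" "s \<in> B" "1 \<le> i"
proof -
  obtain A B where AB: "p = {A,B}" "A \<in> gstar_i g s i" "B \<in> restrict_fam F s" "card A = i - 1 + 1"
    "card B = i - 1 + 1" "card (A \<inter> B) = i - 1" "s \<in> A \<inter> B" using assms unfolding ZV_def by blast
  have "card A = i" using AB(2) unfolding gstar_i_def by blast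
  then have i1: "1 \<le> i" "i - 1 + 1 = i" using AB(4) by arith+
  show ?thesis using that AB i1 by simp
qed

lemma ZV_sub: "p \<in> ZV i \<Longrightarrow> X \<in> p \<Longrightarrow> X \<subseteq> {1..s} \<and> s \<in> X \<and> finite X"
proof -
  assume p: "p \<in> ZV i" and X: "X \<in> p"
  obtain A B where AB: "p = {A,B}" "A \<in> gstar_i g s i" "B \<in> restrict_fam F s" "card A = i" "card B = i"
   "card (A \<inter> B) = i - 1" "s \<in> A" "s \<in> B" "1 \<le> i"
    using p by (rule ZV_memE)
  have A: "A \<subseteq> {1..s}" using gs AB(2) unfolding gstar_i_def by blast
  have fA: "finite A" using finE AB(2) unfolding gstar_i_def by blast
  obtain C where "C \<in> F" "B = C \<inter> {1..s}" using AB(3) unfolding restrict_fam_def by blast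
  then have B: "B \<subseteq> {1..s}" "finite B" by auto
  have "X = A \<or> X = B" using X AB(1) by blast
  then show ?thesis using A fA B AB(7,8) by blast
qed

lemma fin_ZV: "finite (ZV i)"
proof -
  have "ZV i \<subseteq> Pow (Pow {1..s})"
  proof
    fix p assume "p \<in> ZV i"
    then have "\<forall>X\<in>p. X \<subseteq> {1..s}" using ZV_sub by blast
    then show "p \<in> Pow (Pow {1..s})" by blast
  qed
  then show ?thesis using finite_subset by blast
qed

lemma ZV_ne: "p \<in> ZV i \<Longrightarrow> p \<noteq> {}"
  by (erule ZV_memE) simp

end

locale ctx2 = ctx +
  fixes i j :: nat
  assumes gi_ne: "gstar_i g s i \<noteq> {}" and ij: "i \<noteq> j"
begin

lemma giE:
  assumes "E \<in> gstar_i g s i"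
  shows "E \<in> g" "s \<in> E" "card E = i" "E \<subseteq> {1..s}" "finite E"
  using assms gs finE unfolding gstar_i_def by auto

lemma i_facts: "1 \<le> i" "i \<le> k" "i \<le> s"
proof -
  obtain E where E: "E \<in> gstar_i g s i" using gi_ne by blast
  note e = giE[OF E]
  show "1 \<le> i" using e by (metis One_nat_def Suc_leI card_gt_0_iff empty_iff)
  show "i \<le> k" using e gsub by metis
  show "i \<le> s" using e card_mono[of "{1..s}" E] by simp
qed

definition Rm where "Rm = Dfam n k (gstar_i g s j)"
definition F1 where "F1 = (F \<union> Dfam n k (gstar_i' g s i)) - Rm"

lemma nos_notRm: "s \<notin> X \<Longrightarrow> X \<notin> Rm"
proof
  assume "s \<notin> X" "X \<in> Rm"
  then obtain E2 where "E2 \<in> gstar_i g s j" "X \<inter> {1..s} = E2"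
    using Rm_char unfolding Rm_def by blast
  then show False using \<open>s \<notin> X\<close> unfolding gstar_i_def by auto
qed

lemma N_F1: "E \<in> gstar_i g s i \<Longrightarrow> R \<in> Rs (k - i + 1) \<Longrightarrow> (E - {s}) \<union> R \<in> F1"
  using N_props(1,2) unfolding F1_def Rm_def by blast

lemma old_F1: "X \<in> F \<Longrightarrow> X \<notin> Rm \<Longrightarrow> X \<in> F1"
  unfolding F1_def by blast

lemma RsE:
  assumes "R \<in> Rs m"
  shows "R \<subseteq> {s<..n}" "finite R" "card R = m" "s \<notin> R" "R \<inter> {1..s} = {}" "R \<subseteq> {1..n}"
  using assms unfolding Rs_def by (auto intro: finite_subset)

lemma disj: "X \<subseteq> {1..s} \<Longrightarrow> R \<subseteq> {s<..n} \<Longrightarrow> X \<inter> R = {}"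
  by fastforce

lemma card_XR: "X \<subseteq> {1..s} \<Longrightarrow> finite X \<Longrightarrow> R \<in> Rs m \<Longrightarrow> card (X \<union> R) = card X + card R"
  using disj RsE by (metis card_Un_disjoint)

lemma card_cutR: "X \<subseteq> {1..s} \<Longrightarrow> finite X \<Longrightarrow> s \<in> X \<Longrightarrow> card X = i \<Longrightarrow> R \<in> Rs (k - i + 1)
   \<Longrightarrow> card ((X - {s}) \<union> R) = k"
proof -
  assume a: "X \<subseteq> {1..s}" "finite X" "s \<in> X" "card X = i" "R \<in> Rs (k - i + 1)"
  have "card ((X - {s}) \<union> R) = card (X - {s}) + card R" using a by (intro card_XR) auto
  also have "\<dots> = (i - 1) + (k - i + 1)" using a RsE(3)[OF a(5)] by simp
  also have "\<dots> = k" using i_facts by simp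
  finally show ?thesis .
qed

lemma oldY:
  assumes Y: "Y \<in> restrict_fam F s" "s \<in> Y" "card Y = i" and R: "R \<in> Rs (k - i + 1)"
  shows "(Y - {s}) \<union> R \<in> F1"
proof -
  obtain A0 where A0: "A0 \<in> F" "Y = A0 \<inter> {1..s}" using Y(1) unfolding restrict_fam_def by blast
  have Ys: "Y \<subseteq> {1..s}" "finite Y" using A0 by auto
  obtain G where G: "G \<in> g" "G \<subseteq> A0 \<inter> {1..s}" using Fgen[OF A0(1)] by blast
  have GY: "G \<subseteq> Y" using G A0 by simp
  note r = RsE[OF R]
  show ?thesis
  proof (cases "G = Y")
    case True
    then have "Y \<in> gstar_i g s i" using G Y unfolding gstar_i_def by simp
    then show ?thesis using N_F1 R by blast
  next
    case False
    then obtain y where y: "y \<in> Y" "y \<notin> G" using GY by blast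
    have ys: "1 \<le> y" "y \<le> s" using y Ys by auto
    show ?thesis
    proof (cases "y = s")
      case True
      have "G \<subseteq> (Y - {s}) \<union> R" using GY y True by blast
      moreover have "card ((Y - {s}) \<union> R) = k" using card_cutR Ys Y R by blast
      moreover have "(Y - {s}) \<union> R \<subseteq> {1..n}" using Ys r sn by auto
      ultimately have YF: "(Y - {s}) \<union> R \<in> F" using inF G by blast
      have Ys': "s \<notin> (Y - {s}) \<union> R" using r by blast
      show ?thesis by (rule old_F1[OF YF nos_notRm[OF Ys']])
    next
      case False
      define A1 where "A1 = (Y - {y}) \<union> R"
      have cY: "card (Y - {y}) = i - 1" using y Ys Y by simp
      have "card A1 = card (Y - {y}) + card R" unfolding A1_def using Ys r by (intro card_XR[OF _ _ R]) auto
      then have cA1: "card A1 = k" using cY r i_facts by simp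
      have "G \<subseteq> A1" using GY y unfolding A1_def by blast
      moreover have "A1 \<subseteq> {1..n}" unfolding A1_def using Ys r sn by auto
      ultimately have A1F: "A1 \<in> F" using inF G cA1 by blast
      have "s \<in> A1" "y \<notin> A1" unfolding A1_def using Y False y ys r by auto
      then have "(A1 - {s}) \<union> {y} \<in> F" using shiftF[OF A1F ys(1) _ sn] False ys by simp
      moreover have "(A1 - {s}) \<union> {y} = (Y - {s}) \<union> R" unfolding A1_def using y r False by auto
      ultimately have YF: "(Y - {s}) \<union> R \<in> F" by simp
      have Ys': "s \<notin> (Y - {s}) \<union> R" using r by blast
      show ?thesis by (rule old_F1[OF YF nos_notRm[OF Ys']])
    qed
  qed
qed

end

context ctx2 begin

lemma cutN: "E \<in> gstar_i g s i \<Longrightarrow> R \<in> Rs (k - i + 1) \<Longrightarrow> cut ((E - {s}) \<union> R) = E - {s}"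
  by (rule N_props(5))

lemma minusN: "E \<in> gstar_i g s i \<Longrightarrow> R \<in> Rs (k - i + 1) \<Longrightarrow> (E - {s}) \<union> R - {1..s} = R"
  by (rule N_props(6))

lemma N_notF: "E \<in> gstar_i g s i \<Longrightarrow> R \<in> Rs (k - i + 1) \<Longrightarrow> (E - {s}) \<union> R \<notin> F"
  by (rule N_props(3))

lemma N_card: "E \<in> gstar_i g s i \<Longrightarrow> R \<in> Rs (k - i + 1) \<Longrightarrow> card ((E - {s}) \<union> R) = k"
  by (rule N_props(4))

definition f1 where "f1 = (\<lambda>(E, q). (\<lambda>R. (E - {s}) \<union> R) ` q)"
definition S1 where "S1 = f1 ` (gstar_i g s i \<times> PR (k - i + 1))"

lemma S1_elem:
  assumes "Q \<in> S1"
  obtains E R R' where "E \<in> gstar_i g s i" "R \<in> Rs (k - i + 1)" "R' \<in> Rs (k - i + 1)"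
    "card (R \<inter> R') + 1 = k - i + 1" "Q = {(E - {s}) \<union> R, (E - {s}) \<union> R'}"
proof -
  obtain E q where Eq: "E \<in> gstar_i g s i" "q \<in> PR (k - i + 1)" "Q = f1 (E, q)"
    using assms unfolding S1_def by blast
  obtain R R' where RR: "q = {R,R'}" "R \<in> Rs (k - i + 1)" "R' \<in> Rs (k - i + 1)" "card (R \<inter> R') + 1 = k - i + 1"
    using Eq(2) by (rule PR_memE)
  have "Q = {(E - {s}) \<union> R, (E - {s}) \<union> R'}" using Eq(3) RR(1) unfolding f1_def by simp
  then show ?thesis using that Eq RR by blast
qed

lemma S1_sub: "S1 \<subseteq> Z F1"
proof
  fix Q assume "Q \<in> S1"
  then obtain E R R' where a: "E \<in> gstar_i g s i" "R \<in> Rs (k - i + 1)" "R' \<in> Rs (k - i + 1)"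
    "card (R \<inter> R') + 1 = k - i + 1" "Q = {(E - {s}) \<union> R, (E - {s}) \<union> R'}"
    by (rule S1_elem)
  note e = giE[OF a(1)]
  have int: "((E - {s}) \<union> R) \<inter> ((E - {s}) \<union> R') = (E - {s}) \<union> (R \<inter> R')" by blast
  have RR'': "R \<inter> R' \<in> Rs (card (R \<inter> R'))" using RsE[OF a(2)] unfolding Rs_def by auto
  have "card ((E - {s}) \<union> (R \<inter> R')) = card (E - {s}) + card (R \<inter> R')"
    using e by (intro card_XR[OF _ _ RR'']) auto
  also have "\<dots> = k - 1" using e a(4) i_facts by simp
  finally have ci: "card (((E - {s}) \<union> R) \<inter> ((E - {s}) \<union> R')) = k - 1" using int by simp
  show "Q \<in> Z F1" unfolding a(5)
    by (rule Z_intro[OF N_F1[OF a(1,2)] N_F1[OF a(1,3)] N_card[OF a(1,2)] N_card[OF a(1,3)] ci])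
qed

definition h1 where "h1 = (\<lambda>Q. (insert s (cut (SOME X. X \<in> Q)), (\<lambda>X. X - {1..s}) ` Q))"

lemma h1f1: assumes "x \<in> gstar_i g s i \<times> PR (k - i + 1)" shows "h1 (f1 x) = x"
proof -
  obtain E q where x: "x = (E, q)" "E \<in> gstar_i g s i" "q \<in> PR (k - i + 1)" using assms by blast
  obtain R R' where RR: "q = {R,R'}" "R \<in> Rs (k - i + 1)" "R' \<in> Rs (k - i + 1)"
    using x(3) by (rule PR_memE)
  have qRs: "\<And>X. X \<in> q \<Longrightarrow> X \<in> Rs (k - i + 1)" using RR by blast
  define Q where "Q = f1 (E, q)"
  have Q: "Q = (\<lambda>R. (E - {s}) \<union> R) ` q" unfolding Q_def f1_def by simp
  have "\<exists>X. X \<in> Q" using Q RR by blast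
  then have "(SOME X. X \<in> Q) \<in> Q" by (rule someI_ex)
  then obtain R0 where R0: "R0 \<in> q" "(SOME X. X \<in> Q) = (E - {s}) \<union> R0" using Q by blast
  have c1: "insert s (cut (SOME X. X \<in> Q)) = E"
    using R0 cutN[OF x(2) qRs[OF R0(1)]] giE(2)[OF x(2)] by auto
  have "(\<lambda>X. X - {1..s}) ` Q = (\<lambda>R. (E - {s}) \<union> R - {1..s}) ` q" unfolding Q by (simp add: image_image)
  also have "\<dots> = (\<lambda>R. R) ` q" using minusN[OF x(2) qRs] by (intro image_cong) auto
  finally have c2: "(\<lambda>X. X - {1..s}) ` Q = q" by simp
  show ?thesis unfolding x(1) h1_def Q_def[symmetric] using c1 c2 by simp
qed

lemma S1_card: "card S1 = card (gstar_i g s i) * card (PR (k - i + 1))"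
proof -
  have "inj_on f1 (gstar_i g s i \<times> PR (k - i + 1))"
    by (rule inj_on_inverseI[where g = h1]) (rule h1f1)
  then show ?thesis unfolding S1_def by (simp add: card_image card_cartesian_product)
qed

end

context ctx2 begin

definition f2 where "f2 = (\<lambda>(p, R). (\<lambda>X. (X - {s}) \<union> R) ` p)"
definition S2 where "S2 = f2 ` (ZV i \<times> Rs (k - i + 1))"

lemma S2_elem:
  assumes "Q \<in> S2"
  obtains A B R where "A \<in> gstar_i g s i" "B \<in> restrict_fam F s" "card A = i" "card B = i"
   "card (A \<inter> B) = i - 1" "s \<in> A" "s \<in> B" "R \<in> Rs (k - i + 1)"
   "A \<subseteq> {1..s}" "B \<subseteq> {1..s}" "finite A" "finite B"
   "Q = {(A - {s}) \<union> R, (B - {s}) \<union> R}"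
proof -
  obtain p R where pR: "p \<in> ZV i" "R \<in> Rs (k - i + 1)" "Q = f2 (p, R)"
    using assms unfolding S2_def by blast
  obtain A B where AB: "p = {A,B}" "A \<in> gstar_i g s i" "B \<in> restrict_fam F s" "card A = i" "card B = i"
   "card (A \<inter> B) = i - 1" "s \<in> A" "s \<in> B" "1 \<le> i"
    using pR(1) by (rule ZV_memE)
  have sA: "A \<subseteq> {1..s} \<and> finite A" using ZV_sub[OF pR(1)] AB(1) by blast
  have sB: "B \<subseteq> {1..s} \<and> finite B" using ZV_sub[OF pR(1)] AB(1) by blast
  have "Q = {(A - {s}) \<union> R, (B - {s}) \<union> R}" using pR(3) AB(1) unfolding f2_def by simp
  then show ?thesis using that AB pR sA sB by blast
qed

lemma S2_sub: "S2 \<subseteq> Z F1"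
proof
  fix Q assume "Q \<in> S2"
  then obtain A B R where a: "A \<in> gstar_i g s i" "B \<in> restrict_fam F s" "card A = i" "card B = i"
   "card (A \<inter> B) = i - 1" "s \<in> A" "s \<in> B" "R \<in> Rs (k - i + 1)"
   "A \<subseteq> {1..s}" "B \<subseteq> {1..s}" "finite A" "finite B"
   "Q = {(A - {s}) \<union> R, (B - {s}) \<union> R}" by (rule S2_elem)
  have int: "((A - {s}) \<union> R) \<inter> ((B - {s}) \<union> R) = ((A \<inter> B) - {s}) \<union> R" by blast
  have "card ((A \<inter> B) - {s}) = i - 1 - 1" using a by simp
  moreover have "card (((A \<inter> B) - {s}) \<union> R) = card ((A \<inter> B) - {s}) + card R"
    using a by (intro card_XR[OF _ _ a(8)]) auto
  moreover have "1 \<le> card (A \<inter> B)" using a by (metis One_nat_def Suc_leI card_gt_0_iff empty_iff finite_Int IntI)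
  ultimately have ci: "card (((A - {s}) \<union> R) \<inter> ((B - {s}) \<union> R)) = k - 1"
    using int RsE(3)[OF a(8)] a(5) i_facts by simp
  have m1: "(A - {s}) \<union> R \<in> F1" by (rule N_F1[OF a(1) a(8)])
  have m2: "(B - {s}) \<union> R \<in> F1" by (rule oldY[OF a(2) a(7) a(4) a(8)])
  have c1: "card ((A - {s}) \<union> R) = k" by (rule card_cutR[OF a(9) a(11) a(6) a(3) a(8)])
  have c2: "card ((B - {s}) \<union> R) = k" by (rule card_cutR[OF a(10) a(12) a(7) a(4) a(8)])
  show "Q \<in> Z F1" unfolding a(13) by (rule Z_intro[OF m1 m2 c1 c2 ci])
qed

definition h2 where "h2 = (\<lambda>Q. ((\<lambda>X. insert s (cut X)) ` Q, \<Union>Q - {1..s}))"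

lemma h2f2: assumes "x \<in> ZV i \<times> Rs (k - i + 1)" shows "h2 (f2 x) = x"
proof -
  obtain p R where x: "x = (p, R)" "p \<in> ZV i" "R \<in> Rs (k - i + 1)" using assms by blast
  note r = RsE[OF x(3)]
  have pX: "\<And>X. X \<in> p \<Longrightarrow> X \<subseteq> {1..s} \<and> s \<in> X \<and> finite X" using ZV_sub[OF x(2)] by blast
  have c1: "(\<lambda>X. insert s (cut X)) ` f2 (p, R) = p"
  proof -
    have "(\<lambda>X. insert s (cut X)) ` f2 (p, R) = (\<lambda>X. insert s (cut ((X - {s}) \<union> R))) ` p"
      unfolding f2_def by (simp add: image_image)
    also have "\<dots> = (\<lambda>X. X) ` p"
    proof (rule image_cong)
      fix X assume "X \<in> p"
      then have "X \<subseteq> {1..s}" "s \<in> X" using pX by auto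
      then show "insert s (cut ((X - {s}) \<union> R)) = X" unfolding cut_def using r by auto
    qed simp
    finally show ?thesis by simp
  qed
  have c2: "\<Union>(f2 (p, R)) - {1..s} = R"
  proof -
    obtain X where X: "X \<in> p" using ZV_ne[OF x(2)] by blast
    have "\<Union>(f2 (p, R)) = \<Union>((\<lambda>X. (X - {s}) \<union> R) ` p)" unfolding f2_def by simp
    also have "\<dots> = (\<Union>X\<in>p. X - {s}) \<union> R" using X by blast
    finally have "\<Union>(f2 (p, R)) = (\<Union>X\<in>p. X - {s}) \<union> R" .
    moreover have "(\<Union>X\<in>p. X - {s}) \<subseteq> {1..s}" using pX by blast
    ultimately show ?thesis using r by auto
  qed
  show ?thesis unfolding x(1) h2_def using c1 c2 by simp
qed

lemma S2_card: "card S2 = card (ZV i) * card (Rs (k - i + 1))"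
proof -
  have "inj_on f2 (ZV i \<times> Rs (k - i + 1))"
    by (rule inj_on_inverseI[where g = h2]) (rule h2f2)
  then show ?thesis unfolding S2_def by (simp add: card_image card_cartesian_product)
qed

end

context ctx2 begin

definition T3 where
  "T3 = Sigma (gstar_i g s i) (\<lambda>E. Sigma (Rs (k - i + 1)) (\<lambda>R. R \<times> ({1..s} - (E - {s}))))"
definition f3 where
  "f3 = (\<lambda>(E, R, r, y). {(E - {s}) \<union> R, (((E - {s}) \<union> R) - {r}) \<union> {y}})"
definition S3 where "S3 = f3 ` T3"

lemma T3_facts:
  assumes "(E, R, r, y) \<in> T3"
  shows "E \<in> gstar_i g s i" "R \<in> Rs (k - i + 1)" "r \<in> R" "y \<in> {1..s}" "y \<notin> E - {s}"
    "y \<notin> (E - {s}) \<union> R" "r \<noteq> s" "r \<notin> E"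
    "cut ((E - {s}) \<union> R) = E - {s}"
    "cut ((((E - {s}) \<union> R) - {r}) \<union> {y}) = (E - {s}) \<union> {y}"
    "card (cut ((E - {s}) \<union> R)) = i - 1"
    "card (cut ((((E - {s}) \<union> R) - {r}) \<union> {y})) = i"
    "((E - {s}) \<union> R) - ((((E - {s}) \<union> R) - {r}) \<union> {y}) = {r}"
    "((((E - {s}) \<union> R) - {r}) \<union> {y}) - ((E - {s}) \<union> R) = {y}"
    "(E - {s}) \<union> R - {1..s} = R"
proof -
  show E: "E \<in> gstar_i g s i" and R: "R \<in> Rs (k - i + 1)" and r: "r \<in> R"
    and y: "y \<in> {1..s}" "y \<notin> E - {s}" using assms unfolding T3_def by auto
  note e = giE[OF E]
  note rr = RsE[OF R]
  show yB: "y \<notin> (E - {s}) \<union> R" using y rr by auto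
  show rs: "r \<noteq> s" using r rr by auto
  show "r \<notin> E" using r rr e by auto
  show "cut ((E - {s}) \<union> R) = E - {s}" by (rule cutN[OF E R])
  then show "card (cut ((E - {s}) \<union> R)) = i - 1" using e by simp
  show cD: "cut ((((E - {s}) \<union> R) - {r}) \<union> {y}) = (E - {s}) \<union> {y}"
    unfolding cut_def using e rr y r by auto
  show "card (cut ((((E - {s}) \<union> R) - {r}) \<union> {y})) = i"
    unfolding cD using e y i_facts by simp
  show "((E - {s}) \<union> R) - ((((E - {s}) \<union> R) - {r}) \<union> {y}) = {r}" using r yB by auto
  show "((((E - {s}) \<union> R) - {r}) \<union> {y}) - ((E - {s}) \<union> R) = {y}" using r yB by auto
  show "(E - {s}) \<union> R - {1..s} = R" by (rule minusN[OF E R])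
qed

lemma S3_sub: "S3 \<subseteq> Z F1"
proof
  fix Q assume "Q \<in> S3"
  then obtain E R r y where x: "(E, R, r, y) \<in> T3" "Q = f3 (E, R, r, y)" unfolding S3_def by auto
  note t = T3_facts[OF x(1)]
  note e = giE[OF t(1)]
  note rr = RsE[OF t(2)]
  define B where "B = (E - {s}) \<union> R"
  define D where "D = (B - {r}) \<union> {y}"
  have Q: "Q = {B, D}" using x(2) unfolding f3_def B_def D_def by simp
  have BF1: "B \<in> F1" unfolding B_def by (rule N_F1[OF t(1,2)])
  have cB: "card B = k" unfolding B_def by (rule N_card[OF t(1,2)])
  have fB: "finite B" unfolding B_def using e rr by simp
  have rB: "r \<in> B" unfolding B_def using t by simp
  have yB: "y \<notin> B" unfolding B_def using t by simp
  have cBr: "card (B - {r}) = k - 1" using cB rB fB by simp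
  have cD: "card D = k" unfolding D_def using cBr yB fB k1 by simp
  have BD: "B \<inter> D = B - {r}" unfolding D_def using yB by auto
  define A1 where "A1 = E \<union> (R - {r})"
  have Rr: "R - {r} \<in> Rs (k - i)" using t(2,3) rr unfolding Rs_def by auto
  have cA1: "card A1 = k" unfolding A1_def
    using card_XR[OF e(4) e(5) Rr] e(3) i_facts RsE(3)[OF Rr] by simp
  have A1n: "A1 \<subseteq> {1..n}" unfolding A1_def using e(4) rr sn by auto
  have A1F: "A1 \<in> F" by (rule inF[OF A1n cA1 e(1)]) (simp add: A1_def)
  have DF1: "D \<in> F1"
  proof (cases "y = s")
    case True
    have DA: "D = A1" unfolding D_def B_def A1_def using True e(2) t(7) t(8) t(3) by auto
    have "D \<notin> Rm"
    proof
      assume "D \<in> Rm"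
      then obtain E2 where "E2 \<in> gstar_i g s j" "D \<inter> {1..s} = E2"
        using Rm_char unfolding Rm_def by blast
      moreover have "D \<inter> {1..s} = E" unfolding DA A1_def using e(4) rr by auto
      ultimately have "card E = j" unfolding gstar_i_def by auto
      then show False using e(3) ij by simp
    qed
    then show ?thesis using old_F1 A1F DA by simp
  next
    case False
    have ys: "1 \<le> y" "y < s" using t(4) False by auto
    have "s \<in> A1" "y \<notin> A1" unfolding A1_def using e(2) t(5) False rr ys by auto
    then have "(A1 - {s}) \<union> {y} \<in> F" using shiftF[OF A1F ys(1) ys(2) sn] by simp
    moreover have "(A1 - {s}) \<union> {y} = D" unfolding A1_def D_def B_def using t(7) t(8) t(3) rr by auto
    ultimately have DF: "D \<in> F" by simp
    have "s \<notin> D" unfolding D_def B_def using False rr by auto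
    then show ?thesis using old_F1[OF DF nos_notRm] by simp
  qed
  have ci: "card (B \<inter> D) = k - 1" using BD cBr by simp
  show "Q \<in> Z F1" unfolding Q by (rule Z_intro[OF BF1 DF1 cB cD ci])
qed

lemma S3_inj: "inj_on f3 T3"
proof (rule inj_onI)
  fix x1 x2 assume x1: "x1 \<in> T3" and x2: "x2 \<in> T3" and eq: "f3 x1 = f3 x2"
  obtain E1 R1 r1 y1 where x1e: "x1 = (E1, R1, r1, y1)" by (cases x1) auto
  obtain E2 R2 r2 y2 where x2e: "x2 = (E2, R2, r2, y2)" by (cases x2) auto
  note t1 = T3_facts[OF x1[unfolded x1e]]
  note t2 = T3_facts[OF x2[unfolded x2e]]
  define B1 where "B1 = (E1 - {s}) \<union> R1"
  define D1 where "D1 = (B1 - {r1}) \<union> {y1}"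
  define B2 where "B2 = (E2 - {s}) \<union> R2"
  define D2 where "D2 = (B2 - {r2}) \<union> {y2}"
  have eq': "{B1, D1} = {B2, D2}" using eq unfolding x1e x2e f3_def B1_def D1_def B2_def D2_def by simp
  have cc: "card (cut B1) = i - 1" "card (cut D1) = i" "card (cut B2) = i - 1" "card (cut D2) = i"
    using t1 t2 unfolding B1_def D1_def B2_def D2_def by simp_all
  have ii: "i - 1 \<noteq> i" using i_facts by simp
  have "B1 \<noteq> D2" using cc ii by metis
  then have BB: "B1 = B2" using eq' by (metis insertCI insertE singletonD)
  have "D1 \<noteq> B2" using cc ii by metis
  then have DD: "D1 = D2" using eq' by (metis insertCI insertE singletonD)
  have "E1 - {s} = E2 - {s}" using t1(9) t2(9) BB unfolding B1_def B2_def by simp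
  then have E: "E1 = E2" using giE(2)[OF t1(1)] giE(2)[OF t2(1)] by (metis insert_Diff)
  have R: "R1 = R2" using t1(15) t2(15) BB unfolding B1_def B2_def by simp
  have "{r1} = {r2}" using t1(13) t2(13) BB DD unfolding B1_def B2_def D1_def D2_def by simp
  then have r: "r1 = r2" by simp
  have "{y1} = {y2}" using t1(14) t2(14) BB DD unfolding B1_def B2_def D1_def D2_def by simp
  then have y: "y1 = y2" by simp
  show "x1 = x2" unfolding x1e x2e using E R r y by simp
qed

lemma T3_card: "card T3 = card (gstar_i g s i) * (card (Rs (k - i + 1)) * ((k - i + 1) * (s - i + 1)))"
proof -
  have fg: "finite (gstar_i g s i)"
  proof -
    have "gstar_i g s i \<subseteq> Pow {1..n}" unfolding gstar_i_def using gsub by blast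
    then show ?thesis using finite_subset by blast
  qed
  have inner: "card (Sigma (Rs (k - i + 1)) (\<lambda>R. R \<times> ({1..s} - (E - {s})))) = card (Rs (k - i + 1)) * ((k - i + 1) * (s - i + 1))"
    if E: "E \<in> gstar_i g s i" for E
  proof -
    note e = giE[OF E]
    have cd: "card ({1..s} - (E - {s})) = s - i + 1"
    proof -
      have "card ({1..s} - (E - {s})) = card {1..s} - card (E - {s})"
        using e by (intro card_Diff_subset) auto
      then show ?thesis using e i_facts by simp
    qed
    have "card (Sigma (Rs (k - i + 1)) (\<lambda>R. R \<times> ({1..s} - (E - {s}))))
        = (\<Sum>R\<in>Rs (k - i + 1). card (R \<times> ({1..s} - (E - {s}))))"
      using fin_Rs RsE(2) by (intro card_SigmaI) auto
    also have "\<dots> = (\<Sum>R\<in>Rs (k - i + 1). (k - i + 1) * (s - i + 1))"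
      using RsE(3) cd by (intro sum.cong) (auto simp: card_cartesian_product)
    finally show ?thesis by simp
  qed
  have "card T3 = (\<Sum>E\<in>gstar_i g s i. card (Sigma (Rs (k - i + 1)) (\<lambda>R. R \<times> ({1..s} - (E - {s})))))"
    unfolding T3_def using fg fin_Rs RsE(2) by (intro card_SigmaI) auto
  also have "\<dots> = (\<Sum>E\<in>gstar_i g s i. card (Rs (k - i + 1)) * ((k - i + 1) * (s - i + 1)))"
    using inner by (intro sum.cong) auto
  finally show ?thesis by simp
qed

lemma S3_card: "card S3 = card (gstar_i g s i) * (card (Rs (k - i + 1)) * ((k - i + 1) * (s - i + 1)))"
  unfolding S3_def using card_image[OF S3_inj] T3_card by simp

end

context ctx2 begin

lemma gE:
  assumes "E \<in> gstar_i g s x"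
  shows "E \<in> g" "s \<in> E" "card E = x" "E \<subseteq> {1..s}" "finite E"
  using assms gs finE unfolding gstar_i_def by auto

lemma fin_gstar: "finite (gstar_i g s x)"
proof -
  have "gstar_i g s x \<subseteq> Pow {1..n}" unfolding gstar_i_def using gsub by blast
  then show ?thesis using finite_subset by blast
qed

lemma fin_F1: "finite F1"
proof -
  have "F1 \<subseteq> kfam n k" unfolding F1_def using Fk Dfam_kfam by blast
  then show ?thesis using fin_kfam finite_subset by blast
qed

lemma S1_d: "Q \<in> S1 \<Longrightarrow> (\<exists>X\<in>Q. X \<notin> F) \<and> (\<forall>X\<in>Q. \<forall>Y\<in>Q. cut X = cut Y) \<and> (\<forall>X\<in>Q. card (cut X) = i - 1)"
proof -
  assume "Q \<in> S1"
  then obtain E R R' where a: "E \<in> gstar_i g s i" "R \<in> Rs (k - i + 1)" "R' \<in> Rs (k - i + 1)"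
    "card (R \<inter> R') + 1 = k - i + 1" "Q = {(E - {s}) \<union> R, (E - {s}) \<union> R'}"
    by (rule S1_elem)
  have c: "cut ((E - {s}) \<union> R) = E - {s}" "cut ((E - {s}) \<union> R') = E - {s}"
    using cutN[OF a(1)] a(2,3) by auto
  have "card (E - {s}) = i - 1" using gE[OF a(1)] by simp
  then have cc: "card (cut ((E - {s}) \<union> R)) = i - 1" "card (cut ((E - {s}) \<union> R')) = i - 1"
    using c by simp_all
  have n: "(E - {s}) \<union> R \<notin> F" by (rule N_notF[OF a(1,2)])
  have p1: "\<exists>X\<in>Q. X \<notin> F" unfolding a(5) using n by blast
  have p2: "\<forall>X\<in>Q. \<forall>Y\<in>Q. cut X = cut Y" unfolding a(5) using c by simp
  have p3: "\<forall>X\<in>Q. card (cut X) = i - 1" unfolding a(5) using cc by simp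
  show ?thesis using p1 p2 p3 by (intro conjI)
qed

lemma S2_d: "Q \<in> S2 \<Longrightarrow> (\<exists>X\<in>Q. X \<notin> F) \<and> (\<exists>X\<in>Q. \<exists>Y\<in>Q. cut X \<noteq> cut Y) \<and> (\<forall>X\<in>Q. card (cut X) = i - 1)"
proof -
  assume "Q \<in> S2"
  then obtain A B R where a: "A \<in> gstar_i g s i" "B \<in> restrict_fam F s" "card A = i" "card B = i"
   "card (A \<inter> B) = i - 1" "s \<in> A" "s \<in> B" "R \<in> Rs (k - i + 1)"
   "A \<subseteq> {1..s}" "B \<subseteq> {1..s}" "finite A" "finite B"
   "Q = {(A - {s}) \<union> R, (B - {s}) \<union> R}" by (rule S2_elem)
  note r = RsE[OF a(8)]
  have c: "cut ((A - {s}) \<union> R) = A - {s}" "cut ((B - {s}) \<union> R) = B - {s}"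
    unfolding cut_def using a(9,10) r by auto
  have "A \<noteq> B"
  proof
    assume "A = B"
    then have "card (A \<inter> B) = i" using a(3) by simp
    then show False using a(5) i_facts by simp
  qed
  then have ne: "A - {s} \<noteq> B - {s}" using a(6,7) by (metis insert_Diff)
  have cc: "card (A - {s}) = i - 1" "card (B - {s}) = i - 1" using a by auto
  have n: "(A - {s}) \<union> R \<notin> F" by (rule N_notF[OF a(1,8)])
  have p1: "\<exists>X\<in>Q. X \<notin> F" unfolding a(13) using n by blast
  have "cut ((A - {s}) \<union> R) \<noteq> cut ((B - {s}) \<union> R)" using c ne by simp
  then have p2: "\<exists>X\<in>Q. \<exists>Y\<in>Q. cut X \<noteq> cut Y" unfolding a(13) by blast
  have p3: "\<forall>X\<in>Q. card (cut X) = i - 1" unfolding a(13) using c cc by simp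
  show ?thesis using p1 p2 p3 by (intro conjI)
qed

lemma S3_d: "Q \<in> S3 \<Longrightarrow> (\<exists>X\<in>Q. X \<notin> F) \<and> (\<exists>X\<in>Q. card (cut X) = i)"
proof -
  assume "Q \<in> S3"
  then obtain E R r y where x: "(E, R, r, y) \<in> T3" "Q = f3 (E, R, r, y)" unfolding S3_def by auto
  note t = T3_facts[OF x(1)]
  have Q: "Q = {(E - {s}) \<union> R, (((E - {s}) \<union> R) - {r}) \<union> {y}}" using x(2) unfolding f3_def by simp
  have n: "(E - {s}) \<union> R \<notin> F" by (rule N_notF[OF t(1,2)])
  have p1: "\<exists>X\<in>Q. X \<notin> F" unfolding Q using n by blast
  have p2: "\<exists>X\<in>Q. card (cut X) = i" unfolding Q using t(12) by blast
  show ?thesis using p1 p2 by (intro conjI)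
qed

lemma lower: "card (Z (F - Rm)) + card S1 + card S2 + card S3 \<le> card (Z F1)"
proof -
  have sub0: "Z (F - Rm) \<subseteq> Z F1" by (rule Z_mono) (auto simp: F1_def)
  have fZ: "finite (Z F1)" by (rule Z_fin[OF fin_F1])
  have f0: "finite (Z (F - Rm))" using sub0 fZ finite_subset by blast
  have f1: "finite S1" using S1_sub fZ finite_subset by blast
  have f2: "finite S2" using S2_sub fZ finite_subset by blast
  have f3': "finite S3" using S3_sub fZ finite_subset by blast
  have d0: "\<And>Q. Q \<in> Z (F - Rm) \<Longrightarrow> \<forall>X\<in>Q. X \<in> F"
  proof -
    fix Q assume "Q \<in> Z (F - Rm)"
    then obtain A B where "Q = {A,B}" "A \<in> F - Rm" "B \<in> F - Rm" by (rule Z_memE)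
    then show "\<forall>X\<in>Q. X \<in> F" by auto
  qed
  have ii: "i - 1 \<noteq> i" using i_facts by simp
  have nF: "Q \<notin> Z (F - Rm)" if "\<exists>X\<in>Q. X \<notin> F" for Q
  proof
    assume "Q \<in> Z (F - Rm)"
    then have "\<forall>X\<in>Q. X \<in> F" by (rule d0)
    then show False using that by blast
  qed
  have S1Z: "Q \<notin> Z (F - Rm)" if "Q \<in> S1" for Q by (rule nF[OF conjunct1[OF S1_d[OF that]]])
  have S2Z: "Q \<notin> Z (F - Rm)" if "Q \<in> S2" for Q by (rule nF[OF conjunct1[OF S2_d[OF that]]])
  have S3Z: "Q \<notin> Z (F - Rm)" if "Q \<in> S3" for Q by (rule nF[OF conjunct1[OF S3_d[OF that]]])
  have S12: "Q \<notin> S1" if "Q \<in> S2" for Q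
  proof
    assume "Q \<in> S1"
    then have "\<forall>X\<in>Q. \<forall>Y\<in>Q. cut X = cut Y" by (rule conjunct1[OF conjunct2[OF S1_d]])
    moreover have "\<exists>X\<in>Q. \<exists>Y\<in>Q. cut X \<noteq> cut Y" by (rule conjunct1[OF conjunct2[OF S2_d[OF that]]])
    ultimately show False by blast
  qed
  have S13: "Q \<notin> S1" if Q3: "Q \<in> S3" for Q
  proof
    assume "Q \<in> S1"
    then have "\<forall>X\<in>Q. card (cut X) = i - 1" by (rule conjunct2[OF conjunct2[OF S1_d]])
    moreover obtain X where "X \<in> Q" "card (cut X) = i" using conjunct2[OF S3_d[OF Q3]] by blast
    ultimately show False using ii by simp
  qed
  have S23: "Q \<notin> S2" if Q3: "Q \<in> S3" for Q
  proof
    assume "Q \<in> S2"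
    then have "\<forall>X\<in>Q. card (cut X) = i - 1" by (rule conjunct2[OF conjunct2[OF S2_d]])
    moreover obtain X where "X \<in> Q" "card (cut X) = i" using conjunct2[OF S3_d[OF Q3]] by blast
    ultimately show False using ii by simp
  qed
  have disj1: "Z (F - Rm) \<inter> S1 = {}" using S1Z by blast
  have disj2: "(Z (F - Rm) \<union> S1) \<inter> S2 = {}" using S2Z S12 by blast
  have disj3: "(Z (F - Rm) \<union> S1 \<union> S2) \<inter> S3 = {}" using S3Z S13 S23 by blast
  have "card (Z (F - Rm) \<union> S1 \<union> S2 \<union> S3) = card (Z (F - Rm)) + card S1 + card S2 + card S3"
    using f0 f1 f2 f3' disj1 disj2 disj3 by (simp add: card_Un_disjoint)
  moreover have "Z (F - Rm) \<union> S1 \<union> S2 \<union> S3 \<subseteq> Z F1" using sub0 S1_sub S2_sub S3_sub by blast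
  ultimately show ?thesis using card_mono[OF fZ] by metis
qed

end

context ctx2 begin

definition f4 where "f4 = (\<lambda>(E, q). (\<lambda>R. E \<union> R) ` q)"
definition Q4 where "Q4 = f4 ` (gstar_i g s j \<times> PR (k - j))"
definition f5 where "f5 = (\<lambda>(p, R). (\<lambda>X. X \<union> R) ` p)"
definition Q5 where "Q5 = f5 ` (ZV j \<times> Rs (k - j))"
definition T6 where
  "T6 = Sigma (gstar_i g s j) (\<lambda>E. Sigma (Rs (k - j)) (\<lambda>R. insert s R \<times> ({1..s} - E)))"
definition f6 where "f6 = (\<lambda>(E, R, c, y). {E \<union> R, ((E \<union> R) - {c}) \<union> {y}})"
definition Q6 where "Q6 = f6 ` T6"

lemma cover:
  assumes C: "C \<in> Rm" and D: "D \<in> F" and cC: "card C = k" and cD: "card D = k"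
    and cCD: "card (C \<inter> D) = k - 1"
  shows "{C, D} \<in> Q4 \<union> Q5 \<union> Q6"
proof -
  obtain E where E: "E \<in> gstar_i g s j" "C \<inter> {1..s} = E" and Ck: "C \<in> kfam n k"
    using C Rm_char unfolding Rm_def by blast
  note e = gE[OF E(1)]
  have Cn: "C \<subseteq> {1..n}" using Ck unfolding kfam_def by blast
  have Dn: "D \<subseteq> {1..n}" using Fk'[OF D] by blast
  have fC: "finite C" "finite D" using Cn Dn finite_subset by auto
  define R where "R = C - {1..s}"
  have CER: "C = E \<union> R" unfolding R_def using E(2) by blast
  have RR: "R \<in> Rs (card R)" unfolding Rs_def R_def using Cn by auto
  have "card C = card E + card R" unfolding CER by (rule card_XR[OF e(4) e(5) RR])
  then have cR: "card R = k - j" using cC e(3) by simp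
  have Rk: "R \<in> Rs (k - j)" using RR cR by simp
  note rr = RsE[OF Rk]
  have "card (C - D) = 1" using card_Diff_subset_Int[of C D] fC cC cCD k1 by simp
  then obtain c where c: "C - D = {c}" by (auto simp: card_1_singleton_iff)
  have "card (D - C) = 1" using card_Diff_subset_Int[of D C] fC cD cCD k1 by (simp add: Int_commute)
  then obtain y where y: "D - C = {y}" by (auto simp: card_1_singleton_iff)
  have DCy: "D = (C - {c}) \<union> {y}" using c y by blast
  have cC': "c \<in> C" "c \<notin> D" "y \<in> D" "y \<notin> C" using c y by auto
  have yn: "1 \<le> y" "y \<le> n" using Dn cC' by auto
  show ?thesis
  proof (cases "y \<le> s")
    case True
    have yE: "y \<in> {1..s} - E" using True yn cC' CER by auto
    show ?thesis
    proof (cases "c \<in> insert s R")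
      case True
      have "(E, R, c, y) \<in> T6" unfolding T6_def using E(1) Rk True yE by auto
      moreover have "f6 (E, R, c, y) = {C, D}" unfolding f6_def using CER DCy by simp
      ultimately have "{C, D} \<in> Q6" unfolding Q6_def by (metis image_eqI)
      then show ?thesis by blast
    next
      case False
      have cE: "c \<in> E" "c \<noteq> s" "c \<notin> R" using False cC' CER by auto
      define Y where "Y = (E - {c}) \<union> {y}"
      have YD: "Y = D \<inter> {1..s}" unfolding Y_def DCy CER using e(4) rr yE cE by auto
      have Yr: "Y \<in> restrict_fam F s" unfolding restrict_fam_def YD using D by blast
      have j1: "1 \<le> j" using e(2) e(3) e(5) by (metis One_nat_def Suc_leI card_gt_0_iff empty_iff)
      have cY: "card Y = j" unfolding Y_def using e(3) e(5) cE yE j1 by simp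
      have EY: "E \<inter> Y = E - {c}" unfolding Y_def using yE by auto
      have cEY: "card (E \<inter> Y) = j - 1" unfolding EY using e(3) e(5) cE by simp
      have sEY: "s \<in> E \<inter> Y" unfolding Y_def using e(2) cE by auto
      have "{E, Y} \<in> ZV j"
        unfolding ZV_def
        apply (rule CollectI, rule exI[of _ E], rule exI[of _ Y])
        using E(1) Yr e(3) cY cEY sEY j1 by simp
      moreover have "f5 ({E, Y}, R) = {C, D}" unfolding f5_def Y_def using CER DCy cE by auto
      ultimately have "{C, D} \<in> Q5" unfolding Q5_def using Rk by (metis SigmaI image_eqI)
      then show ?thesis by blast
    qed
  next
    case False
    have ys: "s < y" using False by simp
    have cnE: "c \<notin> E"
    proof
      assume cE: "c \<in> E"
      have "D \<inter> {1..s} \<subseteq> E - {c}" unfolding DCy CER using rr ys by auto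
      moreover obtain G where "G \<in> g" "G \<subseteq> D \<inter> {1..s}" using Fgen[OF D] by blast
      ultimately have "G \<in> g" "G \<subseteq> E - {c}" by auto
      then have "G = E" using anti[OF e(1)] by blast
      then show False using \<open>G \<subseteq> E - {c}\<close> cE by blast
    qed
    have cR': "c \<in> R" using cnE cC' CER by blast
    define R' where "R' = (R - {c}) \<union> {y}"
    have R'sub: "R' \<subseteq> {s<..n}" unfolding R'_def using rr ys yn by auto
    have yR: "y \<notin> R" using cC' CER by blast
    have kj: "1 \<le> k - j" using rr cR' by (metis One_nat_def Suc_leI card_gt_0_iff empty_iff)
    have cR'': "card R' = k - j" unfolding R'_def using rr cR' yR kj by (simp add: card_insert_if)
    have RR': "R \<inter> R' = R - {c}" unfolding R'_def using yR by auto
    have cRR: "card (R \<inter> R') + 1 = k - j" unfolding RR' using rr cR' kj by simp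
    have "{R, R'} \<in> PR (k - j)"
      unfolding PR_def
      apply (rule CollectI, rule exI[of _ R], rule exI[of _ R'])
      using rr R'sub cR'' cRR by simp
    moreover have "f4 (E, {R, R'}) = {C, D}" unfolding f4_def R'_def using CER DCy cnE by auto
    ultimately have "{C, D} \<in> Q4" unfolding Q4_def using E(1) by (metis SigmaI image_eqI)
    then show ?thesis by blast
  qed
qed

end

context ctx2 begin

lemma fin_F: "finite F"
  using Fk fin_kfam finite_subset by blast

lemma upper: "card (Z F) \<le> card (Z (F - Rm)) + card Q4 + card Q5 + card Q6"
proof -
  have sub: "Z F \<subseteq> Z (F - Rm) \<union> Q4 \<union> Q5 \<union> Q6"
  proof
    fix Q assume "Q \<in> Z F"
    then obtain A B where a: "Q = {A,B}" "A \<in> F" "B \<in> F" "card A = k" "card B = k" "card (A \<inter> B) = k - 1"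
      by (rule Z_memE)
    show "Q \<in> Z (F - Rm) \<union> Q4 \<union> Q5 \<union> Q6"
    proof (cases "A \<in> Rm")
      case True
      have "{A, B} \<in> Q4 \<union> Q5 \<union> Q6" by (rule cover[OF True a(3,4,5,6)])
      then show ?thesis unfolding a(1) by blast
    next
      case nA: False
      show ?thesis
      proof (cases "B \<in> Rm")
        case True
        have "card (B \<inter> A) = k - 1" using a(6) by (simp add: Int_commute)
        then have "{B, A} \<in> Q4 \<union> Q5 \<union> Q6" by (rule cover[OF True a(2,5,4)])
        then show ?thesis unfolding a(1) by (simp add: insert_commute)
      next
        case False
        have m: "A \<in> F - Rm" "B \<in> F - Rm" using nA False a by auto
        have "{A, B} \<in> Z (F - Rm)" by (rule Z_intro[OF m(1) m(2) a(4) a(5) a(6)])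
        then show ?thesis unfolding a(1) by blast
      qed
    qed
  qed
  have f0: "finite (Z (F - Rm))" using Z_fin fin_F by simp
  have fQ4: "finite Q4" unfolding Q4_def using fin_gstar fin_PR by simp
  have fQ5: "finite Q5" unfolding Q5_def using fin_ZV fin_Rs by simp
  have fT6: "finite T6" unfolding T6_def using fin_gstar fin_Rs RsE(2) by (intro finite_SigmaI) auto
  have fQ6: "finite Q6" unfolding Q6_def using fT6 by simp
  have "card (Z F) \<le> card (Z (F - Rm) \<union> Q4 \<union> Q5 \<union> Q6)"
    using sub f0 fQ4 fQ5 fQ6 by (intro card_mono) auto
  moreover have "card (Z (F - Rm) \<union> Q4 \<union> Q5 \<union> Q6) \<le> card (Z (F - Rm) \<union> Q4 \<union> Q5) + card Q6"
    by (rule card_Un_le)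
  moreover have "card (Z (F - Rm) \<union> Q4 \<union> Q5) \<le> card (Z (F - Rm) \<union> Q4) + card Q5"
    by (rule card_Un_le)
  moreover have "card (Z (F - Rm) \<union> Q4) \<le> card (Z (F - Rm)) + card Q4"
    by (rule card_Un_le)
  ultimately show ?thesis by linarith
qed

lemma Q4_card: "card Q4 \<le> card (gstar_i g s j) * card (PR (k - j))"
  unfolding Q4_def using card_image_le[of "gstar_i g s j \<times> PR (k - j)" f4] fin_gstar fin_PR
  by (simp add: card_cartesian_product)

lemma Q5_card: "card Q5 \<le> card (ZV j) * card (Rs (k - j))"
  unfolding Q5_def using card_image_le[of "ZV j \<times> Rs (k - j)" f5] fin_ZV fin_Rs
  by (simp add: card_cartesian_product)

lemma T6_card: "card T6 = card (gstar_i g s j) * (card (Rs (k - j)) * ((k - j + 1) * (s - j)))"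
proof -
  have inner: "card (Sigma (Rs (k - j)) (\<lambda>R. insert s R \<times> ({1..s} - E))) = card (Rs (k - j)) * ((k - j + 1) * (s - j))"
    if E: "E \<in> gstar_i g s j" for E
  proof -
    note e = gE[OF E]
    have cd: "card ({1..s} - E) = s - j"
      using e card_Diff_subset[of E "{1..s}"] by simp
    have "card (Sigma (Rs (k - j)) (\<lambda>R. insert s R \<times> ({1..s} - E)))
        = (\<Sum>R\<in>Rs (k - j). card (insert s R \<times> ({1..s} - E)))"
      using fin_Rs RsE(2) by (intro card_SigmaI) auto
    also have "\<dots> = (\<Sum>R\<in>Rs (k - j). (k - j + 1) * (s - j))"
    proof (intro sum.cong refl)
      fix R assume R: "R \<in> Rs (k - j)"
      have "card (insert s R) = k - j + 1" using RsE[OF R] by simp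
      then show "card (insert s R \<times> ({1..s} - E)) = (k - j + 1) * (s - j)"
        using cd by (simp add: card_cartesian_product)
    qed
    finally show ?thesis by simp
  qed
  have "card T6 = (\<Sum>E\<in>gstar_i g s j. card (Sigma (Rs (k - j)) (\<lambda>R. insert s R \<times> ({1..s} - E))))"
    unfolding T6_def using fin_gstar fin_Rs RsE(2) by (intro card_SigmaI) auto
  also have "\<dots> = (\<Sum>E\<in>gstar_i g s j. card (Rs (k - j)) * ((k - j + 1) * (s - j)))"
    using inner by (intro sum.cong) auto
  finally show ?thesis by simp
qed

lemma Q6_card: "card Q6 \<le> card (gstar_i g s j) * (card (Rs (k - j)) * ((k - j + 1) * (s - j)))"
proof -
  have fT6: "finite T6" unfolding T6_def using fin_gstar fin_Rs RsE(2) by (intro finite_SigmaI) auto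
  show ?thesis unfolding Q6_def using card_image_le[OF fT6, of f6] T6_card by simp
qed

lemma key:
  "int (card (Z F1)) - int (card (Z F)) \<ge>
     int (card (gstar_i g s i) * card (PR (k - i + 1)))
   + int (card (ZV i) * card (Rs (k - i + 1)))
   + int (card (gstar_i g s i) * (card (Rs (k - i + 1)) * ((k - i + 1) * (s - i + 1))))
   - int (card (gstar_i g s j) * card (PR (k - j)))
   - int (card (ZV j) * card (Rs (k - j)))
   - int (card (gstar_i g s j) * (card (Rs (k - j)) * ((k - j + 1) * (s - j))))"
  using lower upper Q4_card Q5_card Q6_card S1_card S2_card S3_card by linarith

end

lemma ib_nat: "ibinom (int a) (int c) = int (a choose c)"
  unfolding ibinom_def by simp

lemma ib_neg: "x < 0 \<Longrightarrow> ibinom x y = 0"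
  unfolding ibinom_def by simp

lemma ib_2: "ibinom (int a - int b) 2 = int ((a - b) choose 2)"
proof (cases "b \<le> a")
  case True
  then have h: "int a - int b = int (a - b)" by (rule of_nat_diff[symmetric])
  have "ibinom (int (a - b)) (int 2) = int ((a - b) choose 2)" by (rule ib_nat)
  then show ?thesis unfolding h by simp
next
  case False
  then have "int a - int b < 0" by simp
  then have l: "ibinom (int a - int b) 2 = 0" by (rule ib_neg)
  have "a - b = 0" using False by simp
  then have "(a - b) choose 2 = 0" by (simp add: binomial_eq_0)
  then show ?thesis using l by simp
qed

theorem lemma3p2:
  fixes n k t i :: nat and F g :: "nat set set"
  assumes "F \<subseteq> kfam n k"
    and "left_compressed n F"
    and "t_intersecting t F"
    and "g \<in> gen_sets_star n k F"
    and "s = splus_fam g"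
    and "gstar_i g s i \<noteq> {}"
    and "j = s + t - i"
    and "j \<noteq> i"
    and "F1 = (F \<union> Dfam n k (gstar_i' g s i)) - Dfam n k (gstar_i g s j)"
  shows "int (zeta (k - 1) F1 F1) - int (zeta (k - 1) F F) \<ge>
      int (card (gstar_i g s i)) * ibinom (int n - int s) (int k - int i)
          * ibinom (int n - int s - int k + int i) 2
    + int (zeta_v (i - 1) s (gstar_i g s i) (restrict_fam F s)) * ibinom (int n - int s) (int k - int i + 1)
    + int (card (gstar_i g s i)) * (int s - int i + 1) * (int k - int i + 1)
          * ibinom (int n - int s) (int k - int i + 1)
    - int (card (gstar_i g s j)) * ibinom (int n - int s) (int k - int j - 1)
          * ibinom (int n - int s - int k + int j + 1) 2
    - int (zeta_v (j - 1) s (gstar_i g s j) (restrict_fam F s)) * ibinom (int n - int s) (int k - int j)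
    - int (card (gstar_i g s j)) * (int s - int j) * (int k - int j + 1)
          * ibinom (int n - int s) (int k - int j)"
proof -
  note a = assms
  have gg: "g \<in> gen_sets n k F" "g = minimal_elems g" using a(4) unfolding gen_sets_star_def by auto
  have gen: "upset_fam n g \<inter> kfam n k = F" and gsub: "\<And>G. G \<in> g \<Longrightarrow> G \<subseteq> {1..n} \<and> card G \<le> k"
    using gg(1) unfolding gen_sets_def by auto
  have anti: "\<And>G G'. G \<in> g \<Longrightarrow> G' \<in> g \<Longrightarrow> G' \<subseteq> G \<Longrightarrow> G' = G"
  proof -
    fix G G' assume "G \<in> g" "G' \<in> g" "G' \<subseteq> G"
    then have "G \<in> minimal_elems g" using gg(2) by simp
    then show "G' = G" using \<open>G' \<in> g\<close> \<open>G' \<subseteq> G\<close> unfolding minimal_elems_def by blast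
  qed
  obtain E0 where E0: "E0 \<in> g" "s \<in> E0" "card E0 = i" using a(6) unfolding gstar_i_def by blast
  have fg: "finite g"
  proof -
    have "g \<subseteq> Pow {1..n}" using gsub by blast
    then show ?thesis using finite_subset by blast
  qed
  have gne: "g \<noteq> {}" using E0 by blast
  have gs: "\<And>G. G \<in> g \<Longrightarrow> G \<subseteq> {1..s}"
  proof -
    fix G assume G: "G \<in> g"
    have sf: "splus_fam g = Max (splus ` g)" using gne unfolding splus_fam_def by simp
    have "splus G \<le> Max (splus ` g)" using fg G by (intro Max_ge) auto
    then have sG: "splus G \<le> s" using sf a(5) by simp
    show "G \<subseteq> {1..s}"
    proof
      fix x assume x: "x \<in> G"
      have fG: "finite G" using gsub[OF G] finite_subset by blast
      have "x \<le> Max G" using fG x by (rule Max_ge)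
      moreover have "G \<noteq> {}" using x by blast
      then have "splus G = Max G" unfolding splus_def by simp
      moreover have "1 \<le> x" using gsub[OF G] x by auto
      ultimately show "x \<in> {1..s}" using sG by simp
    qed
  qed
  have sn: "s \<le> n" using gsub[OF E0(1)] E0(2) by auto
  have fE0: "finite E0" using gsub[OF E0(1)] finite_subset by blast
  have "0 < card E0" using fE0 E0(2) card_gt_0_iff by blast
  moreover have "card E0 \<le> k" using gsub[OF E0(1)] by blast
  ultimately have k1: "1 \<le> k" by linarith
  interpret ctx2 n k s F g i j
    apply unfold_locales
    subgoal by (rule a(1))
    subgoal by (rule gen)
    subgoal by (rule gsub)
    subgoal by (rule anti)
    subgoal by (rule gs)
    subgoal by (rule a(2))
    subgoal by (rule sn)
    subgoal by (rule k1)
    subgoal by (rule a(6))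
    subgoal using a(8) by simp
    done
  have F1e: "F1 = ctx2.F1 n k s F g i j" unfolding a(9) F1_def Rm_def by simp
  have z1: "zeta (k - 1) F1 F1 = card (Z F1)" unfolding zeta_def Z_def by (rule refl)
  have z2: "zeta (k - 1) F F = card (Z F)" unfolding zeta_def Z_def by (rule refl)
  have zv: "\<And>x. zeta_v (x - 1) s (gstar_i g s x) (restrict_fam F s) = card (ZV x)"
    unfolding zeta_v_def ZV_def by (rule refl)
  note K = key[folded F1e z1 z2 zv]
  note ifa = i_facts
  have isub: "int n - int s = int (n - s)" using sn by simp
  have Rsc: "\<And>m. card (Rs m) = (n - s) choose m" by (rule card_Rs)
  have t1: "int (card (gstar_i g s i)) * ibinom (int n - int s) (int k - int i)
          * ibinom (int n - int s - int k + int i) 2 = int (card (gstar_i g s i) * card (PR (k - i + 1)))"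
  proof -
    have c1: "card (PR (k - i + 1)) = ((n - s) choose (k - i)) * ((n - s - (k - i)) choose 2)"
      using card_PR[of "k - i + 1"] by simp
    have h1: "int k - int i = int (k - i)" using ifa by simp
    have e1: "ibinom (int n - int s) (int k - int i) = int ((n - s) choose (k - i))"
      unfolding h1 isub ib_nat by (rule refl)
    have h: "int n - int s - int k + int i = int n - int (s + (k - i))" using ifa by simp
    have e2: "ibinom (int n - int s - int k + int i) 2 = int ((n - s - (k - i)) choose 2)"
      unfolding h ib_2 diff_diff_left by (rule refl)
    show ?thesis unfolding e1 e2 c1 by simp
  qed
  have h3: "int k - int i + 1 = int (k - i + 1)" using ifa by simp
  have e3: "ibinom (int n - int s) (int k - int i + 1) = int ((n - s) choose (k - i + 1))"
    unfolding h3 isub ib_nat by (rule refl)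
  have t2: "int (card (ZV i)) * ibinom (int n - int s) (int k - int i + 1) = int (card (ZV i) * card (Rs (k - i + 1)))"
    unfolding e3 Rsc by simp
  have t3: "int (card (gstar_i g s i)) * (int s - int i + 1) * (int k - int i + 1)
          * ibinom (int n - int s) (int k - int i + 1)
      = int (card (gstar_i g s i) * (card (Rs (k - i + 1)) * ((k - i + 1) * (s - i + 1))))"
  proof -
    have hh: "int s - int i + 1 = int (s - i + 1)" "int k - int i + 1 = int (k - i + 1)" using ifa by simp_all
    show ?thesis unfolding e3 unfolding Rsc hh of_nat_mult by algebra
  qed
  have jt: "int (card (gstar_i g s j)) * ibinom (int n - int s) (int k - int j - 1)
          * ibinom (int n - int s - int k + int j + 1) 2
       + int (card (ZV j)) * ibinom (int n - int s) (int k - int j)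
       + int (card (gstar_i g s j)) * (int s - int j) * (int k - int j + 1)
          * ibinom (int n - int s) (int k - int j)
     = int (card (gstar_i g s j) * card (PR (k - j)))
       + int (card (ZV j) * card (Rs (k - j)))
       + int (card (gstar_i g s j) * (card (Rs (k - j)) * ((k - j + 1) * (s - j))))"
  proof (cases "gstar_i g s j = {}")
    case True
    have "ZV j = {}"
    proof -
      { fix p assume "p \<in> ZV j"
        then obtain A B where "A \<in> gstar_i g s j" by (rule ZV_memE)
        then have False using True by blast }
      then show ?thesis by blast
    qed
    then show ?thesis using True by simp
  next
    case False
    then obtain E1 where E1: "E1 \<in> gstar_i g s j" by blast
    note e = gE[OF E1]
    have jk: "j \<le> k" using gsub[OF e(1)] e(3) by simp
    have js: "j \<le> s" using e(3) e(4) card_mono[of "{1..s}" E1] by simp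
    have h5: "int k - int j = int (k - j)" using jk by simp
    have e5: "ibinom (int n - int s) (int k - int j) = int ((n - s) choose (k - j))"
      unfolding h5 isub ib_nat by (rule refl)
    have t4: "int (card (gstar_i g s j)) * ibinom (int n - int s) (int k - int j - 1)
          * ibinom (int n - int s - int k + int j + 1) 2 = int (card (gstar_i g s j) * card (PR (k - j)))"
    proof (cases "j = k")
      case True
      have "ibinom (int n - int s) (int k - int j - 1) = 0" unfolding ibinom_def using True by simp
      then show ?thesis using True PR0 by simp
    next
      case False
      then have jk': "j < k" using jk by simp
      have c1: "card (PR (k - j)) = ((n - s) choose (k - j - 1)) * ((n - s - (k - j - 1)) choose 2)"
        using card_PR[of "k - j"] jk' by simp
      have h1: "int k - int j - 1 = int (k - j - 1)" using jk' by simp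
      have e1: "ibinom (int n - int s) (int k - int j - 1) = int ((n - s) choose (k - j - 1))"
        unfolding h1 isub ib_nat by (rule refl)
      have h: "int n - int s - int k + int j + 1 = int n - int (s + (k - j - 1))" using jk' by simp
      have e2: "ibinom (int n - int s - int k + int j + 1) 2 = int ((n - s - (k - j - 1)) choose 2)"
        unfolding h ib_2 diff_diff_left by (rule refl)
      show ?thesis unfolding e1 e2 c1 by simp
    qed
    have t5: "int (card (ZV j)) * ibinom (int n - int s) (int k - int j) = int (card (ZV j) * card (Rs (k - j)))"
      unfolding e5 Rsc by simp
    have t6: "int (card (gstar_i g s j)) * (int s - int j) * (int k - int j + 1)
          * ibinom (int n - int s) (int k - int j)
        = int (card (gstar_i g s j) * (card (Rs (k - j)) * ((k - j + 1) * (s - j))))"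
    proof -
      have hh: "int s - int j = int (s - j)" "int k - int j + 1 = int (k - j + 1)" using jk js by simp_all
      show ?thesis unfolding e5 unfolding Rsc hh of_nat_mult by algebra
    qed
    show ?thesis using t4 t5 t6 by linarith
  qed
  show ?thesis using K t1 t2 t3 jt unfolding z1 z2 zv by linarith
qed


end
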